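(* Let $N\ge 1$ and let $L=\sum_{i=0}^N a_i(x)\partial_x^i$, where each $a_i$ is a complex polynomial with $\deg a_i\le i$, written $a_i(x)=\sum_{j=0}^i a_{i,j}x^j$, with $a_0\equiv 0$ and with the convention $a_i\equiv 0$ (all $a_{i,j}=0$) for $i>N$. For $n\ge 0$ and $0\le k\le n$ put $$\delta_n^{(k)}=\sum_{i=k}^{n}\binom{n}{i}\, i!\, a_{i,i-k}.$$ 1. For every $n\ge 0$, every $\lambda_n\in\mathbb{C}$ and every monic polynomial $P_n(x)=\sum_{i=0}^n b_{n,i}x^i$ of degree $n$ ($b_{n,n}=1$, and $b_{n,s}=0$ for $s>n$), the identity $\sum_{i=1}^N a_i(x)\partial_x^iP_n(x)=\lambda_nP_n(x)$ holds if and only if $$\sum_{k=0}^N\delta_{m+k}^{(k)}\, b_{n,m+k}=\lambda_n b_{n,m},\qquad m=0,1,\ldots,n.$$ 2. Suppose that there are complex numbers $\lambda_n$ ($n\ge 0$, $\lambda_0=0$) and monic polynomials $P_n$ of degree $n$ with $\sum_{i=1}^N a_i\partial_x^iP_n=\lambda_nP_n$ for all $n\ge0$. Let $M$ be the semi-infinite upper triangular matrix with entries (rows and columns indexed from $0$) $M_{r,c}=\delta_c^{(c-r)}$ if $0\le c-r\le N$ and $M_{r,c}=0$ otherwise, and let $M_{n+1}$ be its truncation to the first $n+1$ rows and columns. Assume $\lambda_n\notin\{0,\lambda_1,\ldots,\lambda_{n-1}\}$ for all $n=1,2,\ldots$. Then for each $n\ge1$, $P_n$ is the unique monic polynomial (of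 degree $n$) satisfying $\sum_{i=1}^N a_i\partial_x^iP_n=\lambda_nP_n$, and its coefficient vector $b_n=(b_{n,0},\ldots,b_{n,n-1},1)^T$ is an eigenvector of $M_{n+1}$ for the eigenvalue $\lambda_n$, i.e. $(M_{n+1}-\lambda_nI_{n+1})b_n=0$.
   Context: $\partial_x^i$ denotes the $i$-th derivative with respect to $x$. The normalization $a_0\equiv0$, $\lambda_0=0$ is a standing convention of the paper. *)

theory Defs
  imports "HOL-Computational_Algebra.Polynomial"
begin

definition Lop :: "nat \<Rightarrow> (nat \<Rightarrow> complex poly) \<Rightarrow> complex poly \<Rightarrow> complex poly" where
  "Lop N a p = (\<Sum>i=1..N. a i * (pderiv ^^ i) p)"

definition delta :: "(nat \<Rightarrow> complex poly) \<Rightarrow> nat \<Rightarrow> nat \<Rightarrow> complex" where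
  "delta a n k = (\<Sum>i=k..n. of_nat (n choose i) * fact i * coeff (a i) (i - k))"

definition Mmat :: "nat \<Rightarrow> (nat \<Rightarrow> complex poly) \<Rightarrow> nat \<Rightarrow> nat \<Rightarrow> complex" where
  "Mmat N a r c = (if r \<le> c \<and> c - r \<le> N then delta a c (c - r) else 0)"

end

theory Submission imports Defs begin

lemma poch_choose: "pochhammer (of_nat (Suc s) :: complex) i = of_nat ((s+i) choose i) * fact i"
proof -
  have "(of_nat ((s+i) choose i) :: complex) = (of_nat (s+i) :: complex) gchoose i"
    by (simp add: binomial_gbinomial)
  also have "\<dots> = pochhammer (of_nat (s+i) - of_nat i + 1) i / fact i" by (rule gbinomial_pochhammer')
  finally show ?thesis by (simp add: field_simps)
qed

lemma coeff_Lop: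
  fixes N :: nat and a :: "nat \<Rightarrow> complex poly"
  assumes deg_a: "\<And>i. degree (a i) \<le> i"
    and a0: "a 0 = 0"
    and a_big: "\<And>i. i > N \<Longrightarrow> a i = 0"
  shows "coeff (Lop N a P) m = (\<Sum>k=0..N. delta a (m+k) k * coeff P (m+k))"
proof -
  define F where "F i j = (if j \<le> m \<and> j \<le> i then coeff (a i) j * of_nat ((m-j+i) choose i) * fact i * coeff P (m-j+i) else 0)" for i j
  define G where "G k i = (if k \<le> i \<and> i \<le> m+k then of_nat ((m+k) choose i) * fact i * coeff (a i) (i-k) * coeff P (m+k) else (0::complex))" for k i
  have A: "coeff (a i * (pderiv ^^ i) P) m = (\<Sum>j\<le>i. F i j)" for i
  proof -
    have "coeff (a i * (pderiv ^^ i) P) m = (\<Sum>j\<le>m. coeff (a i) j * coeff ((pderiv ^^ i) P) (m-j))"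
      by (simp add: coeff_mult)
    also have "\<dots> = (\<Sum>j\<le>m. F i j)"
    proof (rule sum.cong[OF refl])
      fix j assume j: "j \<in> {..m}"
      show "coeff (a i) j * coeff ((pderiv ^^ i) P) (m-j) = F i j"
      proof (cases "j \<le> i")
        case True
        have "coeff ((pderiv ^^ i) P) (m-j) = pochhammer (of_nat (Suc (m-j))) i * coeff P (m-j+i)"
          by (rule coeff_higher_pderiv)
        also have "\<dots> = of_nat ((m-j+i) choose i) * fact i * coeff P (m-j+i)"
          by (simp only: poch_choose)
        finally show ?thesis using True j by (simp add: F_def mult_ac)
      next
        case False
        then have "coeff (a i) j = 0" using deg_a[of i] by (intro coeff_eq_0) simp
        then show ?thesis using False by (simp add: F_def)
      qed
    qed
    also have "\<dots> = (\<Sum>j\<in>{..m}\<inter>{..i}. F i j)"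
      by (rule sum.mono_neutral_right) (auto simp: F_def)
    also have "\<dots> = (\<Sum>j\<le>i. F i j)"
      by (rule sum.mono_neutral_left) (auto simp: F_def)
    finally show ?thesis .
  qed
  have B: "delta a (m+k) k * coeff P (m+k) = (\<Sum>i=1..N. G k i)" for k
  proof -
    have "delta a (m+k) k * coeff P (m+k) = (\<Sum>i=k..m+k. of_nat ((m+k) choose i) * fact i * coeff (a i) (i-k) * coeff P (m+k))"
      by (simp add: delta_def sum_distrib_right)
    also have "\<dots> = (\<Sum>i\<in>{i\<in>{1..N}. k \<le> i \<and> i \<le> m+k}. of_nat ((m+k) choose i) * fact i * coeff (a i) (i-k) * coeff P (m+k))"
    proof (rule sum.mono_neutral_right)
      show "\<forall>i\<in>{k..m + k} - {i \<in> {1..N}. k \<le> i \<and> i \<le> m + k}.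
       of_nat (m + k choose i) * fact i * coeff (a i) (i - k) * coeff P (m + k) = 0"
      proof
        fix i assume "i \<in> {k..m + k} - {i \<in> {1..N}. k \<le> i \<and> i \<le> m + k}"
        then have "i = 0 \<or> i > N" by auto
        then have "a i = 0" using a0 a_big by auto
        then show "of_nat (m + k choose i) * fact i * coeff (a i) (i - k) * coeff P (m + k) = (0::complex)" by simp
      qed
    qed auto
    also have "\<dots> = (\<Sum>i=1..N. G k i)"
      unfolding G_def by (rule sum.inter_filter) simp
    finally show ?thesis .
  qed
  have C: "(\<Sum>k=0..N. G k i) = (\<Sum>j\<le>i. F i j)" if i: "i \<in> {1..N}" for i
  proof -
    have "(\<Sum>k=0..N. G k i) = (\<Sum>k\<le>i. G k i)"
      using i by (intro sum.mono_neutral_right) (auto simp: G_def)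
    also have "\<dots> = (\<Sum>j<Suc i. G (i - j) i)"
      using sum.nat_diff_reindex[of "\<lambda>k. G k i" "Suc i"] by (simp add: lessThan_Suc_atMost)
    also have "\<dots> = (\<Sum>j\<le>i. F i j)"
      unfolding lessThan_Suc_atMost
    proof (rule sum.cong[OF refl])
      fix j assume "j \<in> {..i}"
      then have j: "j \<le> i" by simp
      show "G (i - j) i = F i j"
      proof (cases "j \<le> m")
        case True
        then have e: "m + (i - j) = m - j + i" using j by simp
        show ?thesis using True j unfolding G_def F_def e by (simp add: mult_ac)
      next
        case False
        then show ?thesis using j by (simp add: G_def F_def)
      qed
    qed
    finally show ?thesis .
  qed
  have "coeff (Lop N a P) m = (\<Sum>i=1..N. \<Sum>j\<le>i. F i j)"
    by (simp add: Lop_def coeff_sum A)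
  also have "\<dots> = (\<Sum>i=1..N. \<Sum>k=0..N. G k i)"
    by (rule sum.cong[OF refl]) (simp add: C)
  also have "\<dots> = (\<Sum>k=0..N. \<Sum>i=1..N. G k i)" by (rule sum.swap)
  also have "\<dots> = (\<Sum>k=0..N. delta a (m+k) k * coeff P (m+k))" by (simp add: B)
  finally show ?thesis .
qed


lemma M_sum:
  assumes "degree p = n" "r \<le> n"
  shows "(\<Sum>c=0..n. Mmat N a r c * coeff p c) = (\<Sum>k=0..N. delta a (r+k) k * coeff p (r+k))"
proof -
  have "(\<Sum>c=0..n. Mmat N a r c * coeff p c) = (\<Sum>c=0..n+N+r. Mmat N a r c * coeff p c)"
    by (rule sum.mono_neutral_left) (auto simp: coeff_eq_0 assms(1))
  also have "\<dots> = (\<Sum>c=r..r+N. Mmat N a r c * coeff p c)"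
    by (rule sum.mono_neutral_right) (auto simp: Mmat_def)
  also have "\<dots> = (\<Sum>c=r..r+N. delta a c (c-r) * coeff p c)"
    by (rule sum.cong) (auto simp: Mmat_def)
  also have "\<dots> = (\<Sum>k=0..N. delta a (r+k) k * coeff p (r+k))"
    using sum.shift_bounds_cl_nat_ivl[of "\<lambda>c. delta a c (c-r) * coeff p c" 0 r N]
    by (simp add: add.commute)
  finally show ?thesis .
qed

lemma sum_first:
  assumes "\<And>k. k \<ge> 1 \<Longrightarrow> f k = (0::complex)"
  shows "(\<Sum>k=0..(N::nat). f k) = f 0"
proof -
  have "(\<Sum>k=0..N. f k) = f 0 + (\<Sum>k=Suc 0..N. f k)" by (rule sum.atLeast_Suc_atMost) simp
  also have "(\<Sum>k=Suc 0..N. f k) = 0" using assms by (intro sum.neutral) auto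
  finally show ?thesis by simp
qed

theorem theorem1:
  fixes N :: nat and a :: "nat \<Rightarrow> complex poly"
  assumes N1: "N \<ge> 1"
    and deg_a: "\<And>i. degree (a i) \<le> i"
    and a0: "a 0 = 0"
    and a_big: "\<And>i. i > N \<Longrightarrow> a i = 0"
  shows
    "(\<forall>n (lam::complex) (P::complex poly). degree P = n \<longrightarrow> lead_coeff P = 1 \<longrightarrow>
        (Lop N a P = smult lam P \<longleftrightarrow>
         (\<forall>m\<le>n. (\<Sum>k=0..N. delta a (m + k) k * coeff P (m + k)) = lam * coeff P m)))
     \<and>
     (\<forall>(lam::nat \<Rightarrow> complex) (P::nat \<Rightarrow> complex poly).
        lam 0 = 0 \<longrightarrow>
        (\<forall>n. degree (P n) = n \<and> lead_coeff (P n) = 1 \<and> Lop N a (P n) = smult (lam n) (P n)) \<longrightarrow>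
        (\<forall>n\<ge>1. lam n \<noteq> 0 \<and> (\<forall>j\<in>{1..<n}. lam n \<noteq> lam j)) \<longrightarrow>
        (\<forall>n\<ge>1.
           (\<forall>Q::complex poly. degree Q = n \<and> lead_coeff Q = 1 \<and> Lop N a Q = smult (lam n) Q
               \<longrightarrow> Q = P n)
         \<and> (\<forall>r\<le>n. (\<Sum>c=0..n. Mmat N a r c * coeff (P n) c) - lam n * coeff (P n) r = 0)))"
proof -
  note CL = coeff_Lop[OF deg_a a0 a_big]
  have part1: "Lop N a P = smult lam P \<longleftrightarrow>
         (\<forall>m\<le>n. (\<Sum>k=0..N. delta a (m + k) k * coeff P (m + k)) = lam * coeff P m)"
    if "degree P = n" for n lam and P :: "complex poly"
  proof -
    have big: "coeff (Lop N a P) m = lam * coeff P m" if "m > n" for m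
    proof -
      have "coeff (Lop N a P) m = 0"
        using that \<open>degree P = n\<close> by (simp add: CL coeff_eq_0)
      then show ?thesis using that \<open>degree P = n\<close> by (simp add: coeff_eq_0)
    qed
    have "Lop N a P = smult lam P \<longleftrightarrow> (\<forall>m. coeff (Lop N a P) m = lam * coeff P m)"
      by (simp add: poly_eq_iff)
    also have "\<dots> \<longleftrightarrow> (\<forall>m\<le>n. coeff (Lop N a P) m = lam * coeff P m)"
      using big by (meson not_le)
    finally show ?thesis by (simp add: CL)
  qed
  have lead: "coeff (Lop N a P) d = delta a d 0 * coeff P d" if "degree P \<le> d" for P d
  proof -
    have "coeff (Lop N a P) d = (\<Sum>k=0..N. delta a (d+k) k * coeff P (d+k))" by (rule CL)
    also have "\<dots> = delta a (d+0) 0 * coeff P (d+0)"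
      by (rule sum_first) (use that in \<open>auto simp: coeff_eq_0\<close>)
    finally show ?thesis by simp
  qed
  show ?thesis
  proof (rule conjI)
    show "\<forall>n (lam::complex) (P::complex poly). degree P = n \<longrightarrow> lead_coeff P = 1 \<longrightarrow>
        (Lop N a P = smult lam P \<longleftrightarrow>
         (\<forall>m\<le>n. (\<Sum>k=0..N. delta a (m + k) k * coeff P (m + k)) = lam * coeff P m))"
      using part1 by blast
  next
  show "\<forall>(lam::nat \<Rightarrow> complex) (P::nat \<Rightarrow> complex poly).
        lam 0 = 0 \<longrightarrow>
        (\<forall>n. degree (P n) = n \<and> lead_coeff (P n) = 1 \<and> Lop N a (P n) = smult (lam n) (P n)) \<longrightarrow>
        (\<forall>n\<ge>1. lam n \<noteq> 0 \<and> (\<forall>j\<in>{1..<n}. lam n \<noteq> lam j)) \<longrightarrow>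
        (\<forall>n\<ge>1.
           (\<forall>Q::complex poly. degree Q = n \<and> lead_coeff Q = 1 \<and> Lop N a Q = smult (lam n) Q
               \<longrightarrow> Q = P n)
         \<and> (\<forall>r\<le>n. (\<Sum>c=0..n. Mmat N a r c * coeff (P n) c) - lam n * coeff (P n) r = 0))"
  proof (intro allI impI conjI)
    fix lam :: "nat \<Rightarrow> complex" and P :: "nat \<Rightarrow> complex poly" and n :: nat and Q :: "complex poly"
    assume l0: "lam 0 = 0"
      and HP: "\<forall>n. degree (P n) = n \<and> lead_coeff (P n) = 1 \<and> Lop N a (P n) = smult (lam n) (P n)"
      and dist: "\<forall>n\<ge>1. lam n \<noteq> 0 \<and> (\<forall>j\<in>{1..<n}. lam n \<noteq> lam j)"
      and n1: "n \<ge> 1"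
      and HQ: "degree Q = n \<and> lead_coeff Q = 1 \<and> Lop N a Q = smult (lam n) Q"
    have dl: "delta a d 0 = lam d" for d
    proof -
      have "coeff (Lop N a (P d)) d = lam d * coeff (P d) d" using HP by simp
      moreover have "coeff (Lop N a (P d)) d = delta a d 0 * coeff (P d) d" using HP by (intro lead) simp
      moreover have "coeff (P d) d = 1" using HP by metis
      ultimately show ?thesis by simp
    qed
      show "Q = P n"
      proof (rule ccontr)
        assume ne: "Q \<noteq> P n"
        define D where "D = Q - P n"
        define d where "d = degree D"
        have Dne: "D \<noteq> 0" using ne by (simp add: D_def)
        have "degree D \<le> n" unfolding D_def using HQ HP
          by (metis degree_diff_le le_refl)
        moreover have "coeff D n = 0"
        proof -
          have "coeff (P n) n = 1" using HP by metis
          moreover have "coeff Q n = 1" using HQ by metis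
          ultimately show ?thesis by (simp add: D_def)
        qed
        ultimately have dn: "d < n" using Dne unfolding d_def
          by (metis le_neq_implies_less leading_coeff_0_iff)
        have cd: "coeff D d \<noteq> 0" using Dne by (simp add: d_def)
        have "coeff (Lop N a Q) d - coeff (Lop N a (P n)) d = coeff (Lop N a D) d"
          unfolding D_def by (simp only: CL coeff_diff sum_subtractf[symmetric] right_diff_distrib)
        also have "\<dots> = delta a d 0 * coeff D d" by (rule lead) (simp add: d_def)
        finally have e1: "coeff (Lop N a Q) d - coeff (Lop N a (P n)) d = delta a d 0 * coeff D d" .
        have "coeff (Lop N a Q) d = lam n * coeff Q d" using HQ by simp
        moreover have "coeff (Lop N a (P n)) d = lam n * coeff (P n) d" using HP by simp
        ultimately have "delta a d 0 * coeff D d = lam n * coeff D d"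
          using e1 by (simp add: D_def algebra_simps)
        then have ldn: "lam d = lam n" using cd dl by simp
        have ln0: "lam n \<noteq> 0" "\<forall>j\<in>{1..<n}. lam n \<noteq> lam j" using dist n1 by auto
        show False
        proof (cases "d = 0")
          case False
          then have "d \<in> {1..<n}" using dn by simp
          then show False using \<open>lam d = lam n\<close> \<open>\<forall>j\<in>{1..<n}. lam n \<noteq> lam j\<close> by metis
        next
          case True
          then show False using ldn ln0 l0 by simp
        qed
      qed
  next
    fix lam :: "nat \<Rightarrow> complex" and P :: "nat \<Rightarrow> complex poly" and n :: nat
    assume l0: "lam 0 = 0"
      and HP: "\<forall>n. degree (P n) = n \<and> lead_coeff (P n) = 1 \<and> Lop N a (P n) = smult (lam n) (P n)"
      and dist: "\<forall>n\<ge>1. lam n \<noteq> 0 \<and> (\<forall>j\<in>{1..<n}. lam n \<noteq> lam j)"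
      and n1: "n \<ge> 1"
    fix r assume r: "r \<le> n"
      have "Lop N a (P n) = smult (lam n) (P n)" using HP by simp
      then have "(\<Sum>k=0..N. delta a (r + k) k * coeff (P n) (r + k)) = lam n * coeff (P n) r"
        using part1[of "P n" n "lam n"] HP r by simp
      then show "(\<Sum>c=0..n. Mmat N a r c * coeff (P n) c) - lam n * coeff (P n) r = 0"
        using M_sum[of "P n" n r N a] HP r by simp
  qed
  qed
qed

end
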